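(* Let $\mathsf{T}$ be a rooted plane tree. The ornamentation lattice $\mathcal{O}(\mathsf{T})$ is semidistributive.
   Context: A rooted plane tree $\mathsf{T}$ is a finite tree with a distinguished root, regarded as a poset in which $v'\leq v$ iff $v$ lies on the path from $v'$ to the root. An ornament is a nonempty set of nodes inducing a connected subgraph; an ornamentation is a map $\delta$ from nodes to ornaments such that the unique maximal element of $\delta(v)$ is $v$ and any two sets $\delta(v),\delta(v')$ are nested or disjoint. $\mathcal{O}(\mathsf{T})$ is the set of ornamentations ordered by $\delta\leq\delta'$ iff $\delta(v)\subseteq\delta'(v)$ for all $v$ (a lattice). A finite lattice $L$ is semidistributive if for all $a\leq b$ in $L$, the set $\{z\in L:z\wedge b=a\}$ has a maximum element and the set $\{z\in L:z\vee a=b\}$ has a minimum element. *)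

theory Defs
  imports Main
begin

text \<open>A rooted tree: finite node set V, root r, parent map p (used on V - {r});
  every node reaches the root by iterating p. The plane (child ordering) structure
  plays no role for ornamentations and is omitted.\<close>

definition rooted_tree :: "'a set \<Rightarrow> 'a \<Rightarrow> ('a \<Rightarrow> 'a) \<Rightarrow> bool" where
  "rooted_tree V r p \<longleftrightarrow> finite V \<and> r \<in> V \<and> (\<forall>v\<in>V - {r}. p v \<in> V)
     \<and> (\<forall>v\<in>V. \<exists>k. (p ^^ k) v = r \<and> (\<forall>j<k. (p ^^ j) v \<noteq> r))"

definition tree_edges :: "'a set \<Rightarrow> 'a \<Rightarrow> ('a \<Rightarrow> 'a) \<Rightarrow> ('a \<times> 'a) set" where
  "tree_edges V r p = {(v, p v) | v. v \<in> V \<and> v \<noteq> r}"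

definition tree_le :: "'a set \<Rightarrow> 'a \<Rightarrow> ('a \<Rightarrow> 'a) \<Rightarrow> 'a \<Rightarrow> 'a \<Rightarrow> bool" where
  "tree_le V r p x y \<longleftrightarrow> x \<in> V \<and> y \<in> V \<and> (x, y) \<in> (tree_edges V r p)\<^sup>*"

definition ornament :: "'a set \<Rightarrow> 'a \<Rightarrow> ('a \<Rightarrow> 'a) \<Rightarrow> 'a set \<Rightarrow> bool" where
  "ornament V r p S \<longleftrightarrow> S \<noteq> {} \<and> S \<subseteq> V \<and>
     (\<forall>x\<in>S. \<forall>y\<in>S. (x, y) \<in> ((tree_edges V r p \<union> (tree_edges V r p)\<inverse>) \<inter> (S \<times> S))\<^sup>*)"

definition ornamentation :: "'a set \<Rightarrow> 'a \<Rightarrow> ('a \<Rightarrow> 'a) \<Rightarrow> ('a \<Rightarrow> 'a set) \<Rightarrow> bool" where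
  "ornamentation V r p \<delta> \<longleftrightarrow>
     (\<forall>v\<in>V. ornament V r p (\<delta> v) \<and>
        {u \<in> \<delta> v. \<forall>w\<in>\<delta> v. tree_le V r p u w \<longrightarrow> w = u} = {v}) \<and>
     (\<forall>v\<in>V. \<forall>v'\<in>V. \<delta> v \<subseteq> \<delta> v' \<or> \<delta> v' \<subseteq> \<delta> v \<or> \<delta> v \<inter> \<delta> v' = {}) \<and>
     (\<forall>v. v \<notin> V \<longrightarrow> \<delta> v = {})"

definition ornamentations :: "'a set \<Rightarrow> 'a \<Rightarrow> ('a \<Rightarrow> 'a) \<Rightarrow> ('a \<Rightarrow> 'a set) set" where
  "ornamentations V r p = {\<delta>. ornamentation V r p \<delta>}"

definition orn_le :: "'a set \<Rightarrow> ('a \<Rightarrow> 'a set) \<Rightarrow> ('a \<Rightarrow> 'a set) \<Rightarrow> bool" where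
  "orn_le V \<delta> \<delta>' \<longleftrightarrow> (\<forall>v\<in>V. \<delta> v \<subseteq> \<delta>' v)"

definition is_meet :: "'b set \<Rightarrow> ('b \<Rightarrow> 'b \<Rightarrow> bool) \<Rightarrow> 'b \<Rightarrow> 'b \<Rightarrow> 'b \<Rightarrow> bool" where
  "is_meet L le x y m \<longleftrightarrow> m \<in> L \<and> le m x \<and> le m y \<and> (\<forall>z\<in>L. le z x \<and> le z y \<longrightarrow> le z m)"

definition is_join :: "'b set \<Rightarrow> ('b \<Rightarrow> 'b \<Rightarrow> bool) \<Rightarrow> 'b \<Rightarrow> 'b \<Rightarrow> 'b \<Rightarrow> bool" where
  "is_join L le x y m \<longleftrightarrow> m \<in> L \<and> le x m \<and> le y m \<and> (\<forall>z\<in>L. le x z \<and> le y z \<longrightarrow> le m z)"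

definition finite_lattice :: "'b set \<Rightarrow> ('b \<Rightarrow> 'b \<Rightarrow> bool) \<Rightarrow> bool" where
  "finite_lattice L le \<longleftrightarrow> finite L \<and> L \<noteq> {} \<and>
     (\<forall>x\<in>L. le x x) \<and> (\<forall>x\<in>L. \<forall>y\<in>L. le x y \<and> le y x \<longrightarrow> x = y) \<and>
     (\<forall>x\<in>L. \<forall>y\<in>L. \<forall>z\<in>L. le x y \<and> le y z \<longrightarrow> le x z) \<and>
     (\<forall>x\<in>L. \<forall>y\<in>L. (\<exists>m. is_meet L le x y m) \<and> (\<exists>j. is_join L le x y j))"

definition semidistributive :: "'b set \<Rightarrow> ('b \<Rightarrow> 'b \<Rightarrow> bool) \<Rightarrow> bool" where
  "semidistributive L le \<longleftrightarrow> finite_lattice L le \<and>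
     (\<forall>a\<in>L. \<forall>b\<in>L. le a b \<longrightarrow>
        (\<exists>m\<in>{z\<in>L. is_meet L le z b a}. \<forall>z\<in>{z\<in>L. is_meet L le z b a}. le z m) \<and>
        (\<exists>m\<in>{z\<in>L. is_join L le z a b}. \<forall>z\<in>{z\<in>L. is_join L le z a b}. le m z))"

end

theory Submission
  imports Defs "HOL-Library.FuncSet"
begin

lemma is_joinI: "m \<in> L \<Longrightarrow> le x m \<Longrightarrow> le y m \<Longrightarrow> \<forall>z\<in>L. le x z \<and> le y z \<longrightarrow> le m z \<Longrightarrow> is_join L le x y m"
  unfolding is_join_def by blast

lemma is_meetI: "m \<in> L \<Longrightarrow> le m x \<Longrightarrow> le m y \<Longrightarrow> \<forall>z\<in>L. le z x \<and> le z y \<longrightarrow> le z m \<Longrightarrow> is_meet L le x y m"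
  unfolding is_meet_def by blast

locale rtree =
  fixes V :: "'a set" and r :: 'a and p :: "'a \<Rightarrow> 'a"
  assumes rt: "rooted_tree V r p"
begin

abbreviation E where "E \<equiv> tree_edges V r p"
abbreviation tle where "tle \<equiv> tree_le V r p"

lemma finV: "finite V" and rV: "r \<in> V" and pV: "\<And>v. v \<in> V \<Longrightarrow> v \<noteq> r \<Longrightarrow> p v \<in> V"
  using rt unfolding rooted_tree_def by auto

lemma reach: "v \<in> V \<Longrightarrow> \<exists>k. (p ^^ k) v = r"
  using rt unfolding rooted_tree_def by blast

lemma edge_iff: "(x, y) \<in> E \<longleftrightarrow> x \<in> V \<and> x \<noteq> r \<and> y = p x"
  unfolding tree_edges_def by auto

lemma tle_V: "tle x y \<Longrightarrow> x \<in> V \<and> y \<in> V"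
  unfolding tree_le_def by auto

lemma tle_refl: "x \<in> V \<Longrightarrow> tle x x"
  unfolding tree_le_def by auto

lemma tle_trans: "tle x y \<Longrightarrow> tle y z \<Longrightarrow> tle x z"
  unfolding tree_le_def by auto

lemma tle_step: "x \<in> V \<Longrightarrow> x \<noteq> r \<Longrightarrow> tle x (p x)"
  unfolding tree_le_def using pV edge_iff by blast

lemma tle_pred: assumes "tle x y" "x \<noteq> y" shows "x \<noteq> r \<and> tle (p x) y"
proof -
  have "(x, y) \<in> E\<^sup>*" using assms unfolding tree_le_def by auto
  then obtain z where "(x, z) \<in> E" "(z, y) \<in> E\<^sup>*" using assms(2)
    by (metis converse_rtranclE)
  then show ?thesis using assms pV unfolding tree_le_def edge_iff by auto
qed

lemma cyc: "(z, z) \<in> E\<^sup>+ \<Longrightarrow> z \<noteq> r \<and> (p z, p z) \<in> E\<^sup>+"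
proof -
  assume a: "(z, z) \<in> E\<^sup>+"
  then obtain y where y: "(z, y) \<in> E" "(y, z) \<in> E\<^sup>*" by (meson tranclD)
  then have "y = p z" "z \<noteq> r" using edge_iff by auto
  then show ?thesis using y by (meson rtrancl_into_trancl1)
qed

lemma no_cycle: "(x, x) \<notin> E\<^sup>+"
proof
  assume a: "(x, x) \<in> E\<^sup>+"
  then have xV: "x \<in> V" using edge_iff by (metis converse_tranclE)
  have "\<forall>k. ((p ^^ k) x, (p ^^ k) x) \<in> E\<^sup>+"
  proof
    fix k show "((p ^^ k) x, (p ^^ k) x) \<in> E\<^sup>+"
      by (induction k) (use a cyc in auto)
  qed
  then have "\<forall>k. (p ^^ k) x \<noteq> r" using cyc by blast
  then show False using reach[OF xV] by blast
qed

lemma tle_antisym: assumes "tle x y" "tle y x" shows "x = y"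
proof (rule ccontr)
  assume ne: "x \<noteq> y"
  have "(x, y) \<in> E\<^sup>+" using assms(1) ne unfolding tree_le_def
    by (metis rtrancl_eq_or_trancl)
  moreover have "(y, x) \<in> E\<^sup>*" using assms(2) unfolding tree_le_def by auto
  ultimately have "(x, x) \<in> E\<^sup>+" by (meson trancl_rtrancl_trancl)
  then show False using no_cycle by blast
qed

lemma tle_total: assumes "tle z a" "tle z b" shows "tle a b \<or> tle b a"
proof -
  have "(z, a) \<in> E\<^sup>*" using assms unfolding tree_le_def by auto
  then have "\<forall>b. (z, b) \<in> E\<^sup>* \<longrightarrow> (a, b) \<in> E\<^sup>* \<or> (b, a) \<in> E\<^sup>*"
  proof (induction rule: converse_rtrancl_induct)
    case base then show ?case by auto
  next
    case (step z y)
    show ?case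
    proof (intro allI impI)
      fix b assume zb: "(z, b) \<in> E\<^sup>*"
      show "(a, b) \<in> E\<^sup>* \<or> (b, a) \<in> E\<^sup>*"
      proof (cases "z = b")
        case True then show ?thesis using step by (meson converse_rtrancl_into_rtrancl)
      next
        case False
        then obtain y' where "(z, y') \<in> E" "(y', b) \<in> E\<^sup>*" using zb by (metis converse_rtranclE)
        then have "y' = y" using step edge_iff by auto
        then show ?thesis using step \<open>(y', b) \<in> E\<^sup>*\<close> by auto
      qed
    qed
  qed
  then show ?thesis using assms unfolding tree_le_def by auto
qed

definition orn_at :: "'a \<Rightarrow> 'a set \<Rightarrow> bool" where
  "orn_at v S \<longleftrightarrow> v \<in> S \<and> (\<forall>x\<in>S. tle x v) \<and> (\<forall>x\<in>S. x \<noteq> v \<longrightarrow> p x \<in> S)"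

abbreviation R where "R S \<equiv> (E \<union> E\<inverse>) \<inter> (S \<times> S)"

lemma orn_path: assumes "orn_at w S" "z \<in> S" "tle z u" "tle u w" shows "u \<in> S"
proof -
  have "(z, u) \<in> E\<^sup>*" using assms unfolding tree_le_def by auto
  then have "z \<in> S \<longrightarrow> u \<in> S"
  proof (induction rule: converse_rtrancl_induct)
    case base then show ?case by auto
  next
    case (step z y)
    show ?case
    proof
      assume zS: "z \<in> S"
      have y: "y = p z" "z \<in> V" using step edge_iff by auto
      show "u \<in> S"
      proof (cases "z = w")
        case True
        have "tle z u" using step(1,2) y unfolding tree_le_def
          using tle_V[OF assms(4)] by (meson converse_rtrancl_into_rtrancl)
        then have "u = w" using True assms(4) tle_antisym by blast
        then show ?thesis using assms(1) unfolding orn_at_def by auto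
      next
        case False
        then have "y \<in> S" using assms(1) zS y unfolding orn_at_def by auto
        then show ?thesis using step by auto
      qed
    qed
  qed
  then show ?thesis using assms by auto
qed

lemma orn_iff: assumes vV: "v \<in> V"
  shows "(ornament V r p S \<and> {u \<in> S. \<forall>w\<in>S. tle u w \<longrightarrow> w = u} = {v}) \<longleftrightarrow> orn_at v S"
proof
  assume a: "ornament V r p S \<and> {u \<in> S. \<forall>w\<in>S. tle u w \<longrightarrow> w = u} = {v}"
  have vS: "v \<in> S" and vmax: "\<forall>w\<in>S. tle v w \<longrightarrow> w = v" using a by blast+
  have SV: "S \<subseteq> V" and conn: "\<forall>x\<in>S. \<forall>y\<in>S. (x, y) \<in> (R S)\<^sup>*" using a unfolding ornament_def by auto
  have down: "tle x v" if xS: "x \<in> S" for x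
  proof -
    have "(v, x) \<in> (R S)\<^sup>*" using conn vS xS by blast
    then have "tle x v"
    proof (induction rule: rtrancl_induct)
      case base then show ?case using vV tle_refl by auto
    next
      case (step z z')
      then have zS: "z \<in> S" "z' \<in> S" by auto
      from step(2) have "(z, z') \<in> E \<or> (z', z) \<in> E" by auto
      then show ?case
      proof
        assume e: "(z, z') \<in> E"
        then have z': "z' = p z" "z \<noteq> r" "z \<in> V" using edge_iff by auto
        show ?thesis
        proof (cases "z = v")
          case True
          then have "tle v z'" using z' tle_step by auto
          then have "z' = v" using vmax zS by auto
          then show ?thesis using vV tle_refl by auto
        next
          case False then show ?thesis using tle_pred step(3) z' by auto
        qed
      next
        assume e: "(z', z) \<in> E"
        then have "z = p z'" "z' \<noteq> r" "z' \<in> V" using edge_iff by auto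
        then have "tle z' z" using tle_step by auto
        then show ?thesis using step(3) tle_trans by blast
      qed
    qed
    then show ?thesis .
  qed
  have closed: "p x \<in> S" if xS: "x \<in> S" and xv: "x \<noteq> v" for x
  proof (rule ccontr)
    assume npx: "p x \<notin> S"
    have "(x, v) \<in> (R S)\<^sup>*" using conn vS xS by blast
    then have "tle v x"
    proof (induction rule: rtrancl_induct)
      case base then show ?case using SV xS tle_refl by auto
    next
      case (step z z')
      then have zS: "z \<in> S" "z' \<in> S" by auto
      from step(2) have "(z, z') \<in> E \<or> (z', z) \<in> E" by auto
      then show ?case
      proof
        assume e: "(z, z') \<in> E"
        then have z': "z' = p z" "z \<noteq> r" "z \<in> V" using edge_iff by auto
        show ?thesis
        proof (cases "z = x")
          case True
          then show ?thesis using npx z' zS by auto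
        next
          case False then show ?thesis using tle_pred step(3) z' by auto
        qed
      next
        assume e: "(z', z) \<in> E"
        then have "z = p z'" "z' \<noteq> r" "z' \<in> V" using edge_iff by auto
        then have "tle z' z" using tle_step by auto
        then show ?thesis using step(3) tle_trans by blast
      qed
    qed
    then show False using down[OF xS] tle_antisym xv by blast
  qed
  show "orn_at v S" unfolding orn_at_def using vS down closed by blast
next
  assume o: "orn_at v S"
  have vS: "v \<in> S" and down: "\<forall>x\<in>S. tle x v" and cl: "\<forall>x\<in>S. x \<noteq> v \<longrightarrow> p x \<in> S"
    using o unfolding orn_at_def by auto
  have SV: "S \<subseteq> V" using down tle_V by blast
  have tov: "(x, v) \<in> (R S)\<^sup>* \<and> (v, x) \<in> (R S)\<^sup>*" if xS: "x \<in> S" for x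
  proof -
    have "(x, v) \<in> E\<^sup>*" using down xS unfolding tree_le_def by auto
    then have "x \<in> S \<longrightarrow> (x, v) \<in> (R S)\<^sup>* \<and> (v, x) \<in> (R S)\<^sup>*"
    proof (induction rule: converse_rtrancl_induct)
      case base then show ?case by auto
    next
      case (step z y)
      show ?case
      proof
        assume zS: "z \<in> S"
        show "(z, v) \<in> (R S)\<^sup>* \<and> (v, z) \<in> (R S)\<^sup>*"
        proof (cases "z = v")
          case True then show ?thesis by auto
        next
          case False
          have y: "y = p z" using step edge_iff by auto
          then have yS: "y \<in> S" using cl zS False by auto
          have "(z, y) \<in> R S" "(y, z) \<in> R S" using step(1) zS yS by auto
          then show ?thesis using step(3) yS
            by (meson converse_rtrancl_into_rtrancl rtrancl_into_rtrancl)
        qed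
      qed
    qed
    then show ?thesis using xS by auto
  qed
  have "ornament V r p S" unfolding ornament_def
  proof (intro conjI ballI)
    show "S \<noteq> {}" using vS by auto
    show "S \<subseteq> V" using SV .
    fix x y assume "x \<in> S" "y \<in> S"
    then show "(x, y) \<in> (R S)\<^sup>*" using tov by (meson rtrancl_trans)
  qed
  moreover have "{u \<in> S. \<forall>w\<in>S. tle u w \<longrightarrow> w = u} = {v}"
  proof
    show "{u \<in> S. \<forall>w\<in>S. tle u w \<longrightarrow> w = u} \<subseteq> {v}" using down vS by auto
    show "{v} \<subseteq> {u \<in> S. \<forall>w\<in>S. tle u w \<longrightarrow> w = u}" using down vS tle_antisym by auto
  qed
  ultimately show "ornament V r p S \<and> {u \<in> S. \<forall>w\<in>S. tle u w \<longrightarrow> w = u} = {v}" by blast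
qed

definition good :: "('a \<Rightarrow> 'a set) \<Rightarrow> bool" where
  "good d \<longleftrightarrow> (\<forall>v\<in>V. orn_at v (d v)) \<and> (\<forall>v\<in>V. \<forall>w\<in>d v. d w \<subseteq> d v) \<and> (\<forall>v. v \<notin> V \<longrightarrow> d v = {})"

lemma ornamentation_good: "ornamentation V r p d \<longleftrightarrow> good d"
proof
  assume a: "ornamentation V r p d"
  have o: "\<forall>v\<in>V. orn_at v (d v)"
  proof
    fix v assume "v \<in> V"
    then show "orn_at v (d v)" using a orn_iff[of v "d v"] unfolding ornamentation_def by auto
  qed
  have lam: "\<forall>v\<in>V. \<forall>v'\<in>V. d v \<subseteq> d v' \<or> d v' \<subseteq> d v \<or> d v \<inter> d v' = {}"
    and out: "\<forall>v. v \<notin> V \<longrightarrow> d v = {}" using a unfolding ornamentation_def by auto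
  have "d w \<subseteq> d v" if "v \<in> V" "w \<in> d v" for v w
  proof -
    have wV: "w \<in> V" "tle w v" using o that unfolding orn_at_def using tle_V by blast+
    have "w \<in> d w" using o wV unfolding orn_at_def by auto
    then have "d w \<subseteq> d v \<or> d v \<subseteq> d w" using lam that wV by blast
    then show ?thesis
    proof
      assume "d v \<subseteq> d w"
      then have "v \<in> d w" using o that unfolding orn_at_def by auto
      then have "tle v w" using o wV unfolding orn_at_def by auto
      then show ?thesis using wV tle_antisym by auto
    qed
  qed
  then show "good d" unfolding good_def using o out by blast
next
  assume g: "good d"
  have o: "\<forall>v\<in>V. orn_at v (d v)" and sub: "\<forall>v\<in>V. \<forall>w\<in>d v. d w \<subseteq> d v"
    and out: "\<forall>v. v \<notin> V \<longrightarrow> d v = {}" using g unfolding good_def by auto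
  have lam: "d v \<subseteq> d v' \<or> d v' \<subseteq> d v \<or> d v \<inter> d v' = {}" if "v \<in> V" "v' \<in> V" for v v'
  proof (cases "d v \<inter> d v' = {}")
    case False
    then obtain z where z: "z \<in> d v" "z \<in> d v'" by auto
    then have "tle z v" "tle z v'" using o that unfolding orn_at_def by auto
    then have "tle v v' \<or> tle v' v" using tle_total by blast
    then show ?thesis
    proof
      assume "tle v v'"
      then have "v \<in> d v'" using orn_path o that z \<open>tle z v\<close> by blast
      then show ?thesis using sub that by auto
    next
      assume "tle v' v"
      then have "v' \<in> d v" using orn_path o that z \<open>tle z v'\<close> by blast
      then show ?thesis using sub that by auto
    qed
  qed auto
  have "\<forall>v\<in>V. ornament V r p (d v) \<and> {u \<in> d v. \<forall>w\<in>d v. tle u w \<longrightarrow> w = u} = {v}"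
    using o orn_iff by blast
  then show "ornamentation V r p d" unfolding ornamentation_def using lam out by blast
qed

definition pregood :: "('a \<Rightarrow> 'a set) \<Rightarrow> bool" where
  "pregood S \<longleftrightarrow> (\<forall>w x. x \<in> S w \<longrightarrow> tle x w \<and> (x \<noteq> w \<longrightarrow> p x \<in> S w))"

lemma good_pregood: assumes "good d" shows "pregood d"
  unfolding pregood_def
proof (intro allI impI)
  fix w x assume x: "x \<in> d w"
  then have "w \<in> V" using assms unfolding good_def by auto
  then have "orn_at w (d w)" using assms unfolding good_def by auto
  then show "tle x w \<and> (x \<noteq> w \<longrightarrow> p x \<in> d w)" using x unfolding orn_at_def by auto
qed

lemma good_down: "good d \<Longrightarrow> x \<in> d v \<Longrightarrow> tle x v"
  using good_pregood pregood_def by blast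

lemma good_self: "good d \<Longrightarrow> v \<in> V \<Longrightarrow> v \<in> d v"
  unfolding good_def orn_at_def by blast

lemma good_lam: assumes "good d" "w \<in> d v" shows "d w \<subseteq> d v"
proof -
  have "v \<in> V" using assms unfolding good_def by auto
  then show ?thesis using assms unfolding good_def by auto
qed

lemma good_path: assumes "good d" "x \<in> d v" "tle x w" "tle w v" shows "w \<in> d v"
proof -
  have "v \<in> V" using assms tle_V by auto
  then have "orn_at v (d v)" using assms unfolding good_def by auto
  then show ?thesis using orn_path assms by blast
qed

lemma pregood_Union: "\<forall>z\<in>Z. pregood z \<Longrightarrow> pregood (\<lambda>v. \<Union>z\<in>Z. z v)"
  unfolding pregood_def by blast

lemma good_Inter: assumes "Z \<noteq> {}" "\<forall>z\<in>Z. good z" shows "good (\<lambda>v. \<Inter>z\<in>Z. z v)"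
proof -
  obtain z0 where z0: "z0 \<in> Z" using assms by auto
  have "orn_at v (\<Inter>z\<in>Z. z v)" if vV: "v \<in> V" for v
  proof -
    have "v \<in> (\<Inter>z\<in>Z. z v)"
    proof
      fix z assume "z \<in> Z" then show "v \<in> z v" using assms vV good_self by auto
    qed
    moreover have "tle x v" if "x \<in> (\<Inter>z\<in>Z. z v)" for x
    proof -
      have "x \<in> z0 v" using that z0 by auto
      then show ?thesis using z0 assms good_down by auto
    qed
    moreover have "p x \<in> (\<Inter>z\<in>Z. z v)" if "x \<in> (\<Inter>z\<in>Z. z v)" "x \<noteq> v" for x
    proof
      fix z assume zZ: "z \<in> Z"
      then have "pregood z" using assms good_pregood by auto
      moreover have "x \<in> z v" using that zZ by auto
      ultimately show "p x \<in> z v" using that unfolding pregood_def by auto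
    qed
    ultimately show ?thesis unfolding orn_at_def by auto
  qed
  moreover have "(\<Inter>z\<in>Z. z w) \<subseteq> (\<Inter>z\<in>Z. z v)" if "w \<in> (\<Inter>z\<in>Z. z v)" for v w
  proof
    fix y assume y: "y \<in> (\<Inter>z\<in>Z. z w)"
    show "y \<in> (\<Inter>z\<in>Z. z v)"
    proof
      fix z assume zZ: "z \<in> Z"
      then have "z w \<subseteq> z v" using that assms good_lam by auto
      then show "y \<in> z v" using y zZ by auto
    qed
  qed
  moreover have "(\<Inter>z\<in>Z. z v) = {}" if "v \<notin> V" for v
  proof -
    have "z0 v = {}" using that assms z0 unfolding good_def by auto
    then show ?thesis using z0 by auto
  qed
  ultimately show ?thesis unfolding good_def by auto
qed

lemma le_iff: assumes "good a" shows "orn_le V a b \<longleftrightarrow> (\<forall>v. a v \<subseteq> b v)"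
proof
  assume "orn_le V a b"
  then show "\<forall>v. a v \<subseteq> b v" using assms unfolding orn_le_def good_def by (metis empty_subsetI)
qed (auto simp: orn_le_def)

inductive_set clo :: "('a \<Rightarrow> 'a set) \<Rightarrow> 'a \<Rightarrow> 'a set" for S :: "'a \<Rightarrow> 'a set" and v :: 'a where
  base: "v \<in> V \<Longrightarrow> v \<in> clo S v"
| step: "w \<in> clo S v \<Longrightarrow> x \<in> S w \<Longrightarrow> x \<in> clo S v"

lemma clo_down: "x \<in> clo S v \<Longrightarrow> pregood S \<Longrightarrow> tle x v"
proof (induction rule: clo.induct)
  case base then show ?case using tle_refl by auto
next
  case (step w x)
  then have "tle x w" unfolding pregood_def by blast
  then show ?case using step tle_trans by blast
qed

lemma clo_pclosed: "x \<in> clo S v \<Longrightarrow> pregood S \<Longrightarrow> x \<noteq> v \<Longrightarrow> p x \<in> clo S v"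
proof (induction rule: clo.induct)
  case base then show ?case by auto
next
  case (step w x)
  show ?case
  proof (cases "x = w")
    case True then show ?thesis using step by auto
  next
    case False
    then have "p x \<in> S w" using step pregood_def by blast
    then show ?thesis using step clo.step by blast
  qed
qed

lemma clo_trans: "y \<in> clo S w \<Longrightarrow> w \<in> clo S v \<Longrightarrow> y \<in> clo S v"
  by (induction rule: clo.induct) (auto intro: clo.step)

lemma clo_good: assumes "pregood S" shows "good (clo S)"
proof -
  have "orn_at v (clo S v)" if "v \<in> V" for v
    unfolding orn_at_def using that clo.base clo_down clo_pclosed assms by blast
  moreover have "clo S v = {}" if "v \<notin> V" for v
    using that clo_down[OF _ assms] tle_V by blast
  ultimately show ?thesis unfolding good_def using clo_trans by blast
qed

lemma clo_ub: assumes "pregood S" shows "S v \<subseteq> clo S v"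
proof
  fix x assume x: "x \<in> S v"
  then have "v \<in> V" using assms tle_V unfolding pregood_def by blast
  then show "x \<in> clo S v" using x clo.base clo.step by blast
qed

lemma clo_least: assumes "good d" "\<And>v. S v \<subseteq> d v" shows "clo S v \<subseteq> d v"
proof
  fix x assume "x \<in> clo S v"
  then show "x \<in> d v"
  proof (induction rule: clo.induct)
    case base then show ?case using assms good_self by auto
  next
    case (step w x)
    then show ?case using assms good_lam by blast
  qed
qed

lemma clo_cases: "x \<in> clo S u \<Longrightarrow> x = u \<or> (\<exists>w\<in>clo S u. w \<noteq> x \<and> x \<in> S w)"
proof (induction rule: clo.induct)
  case base then show ?case by simp
next
  case (step w x)
  show ?case
  proof (cases "w = x")
    case True then show ?thesis using step.IH by simp
  next
    case False then show ?thesis using step.hyps by blast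
  qed
qed

lemma pregood_un: "good x \<Longrightarrow> good y \<Longrightarrow> pregood (\<lambda>v. x v \<union> y v)"
  using good_pregood unfolding pregood_def by blast

lemma card_down_less: assumes "tle w u" "w \<noteq> u"
  shows "card {y\<in>V. tle y w} < card {y\<in>V. tle y u}"
proof (rule psubset_card_mono)
  show "finite {y\<in>V. tle y u}" using finV by auto
  have "{y\<in>V. tle y w} \<subseteq> {y\<in>V. tle y u}" using assms tle_trans by blast
  moreover have "u \<in> {y\<in>V. tle y u}" using assms tle_V tle_refl by auto
  moreover have "u \<notin> {y\<in>V. tle y w}" using assms tle_antisym by auto
  ultimately show "{y\<in>V. tle y w} \<subset> {y\<in>V. tle y u}" by blast
qed

lemma card_up_less: assumes "tle x w" "x \<noteq> w"
  shows "card {y\<in>V. tle w y} < card {y\<in>V. tle x y}"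
proof (rule psubset_card_mono)
  show "finite {y\<in>V. tle x y}" using finV by auto
  have "{y\<in>V. tle w y} \<subseteq> {y\<in>V. tle x y}" using assms tle_trans by blast
  moreover have "x \<in> {y\<in>V. tle x y}" using assms tle_V tle_refl by auto
  moreover have "x \<notin> {y\<in>V. tle w y}" using assms tle_antisym by auto
  ultimately show "{y\<in>V. tle w y} \<subset> {y\<in>V. tle x y}" by blast
qed

lemma msd:
  assumes ga: "good a" and gb: "good b"
    and Z: "\<forall>z\<in>Z. good z \<and> (\<forall>v. z v \<inter> b v \<subseteq> a v) \<and> (\<forall>v. a v \<subseteq> z v)"
  shows "clo (\<lambda>v. \<Union>z\<in>Z. z v) v \<inter> b v \<subseteq> a v"
proof -
  let ?U = "\<lambda>v. \<Union>z\<in>Z. z v"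
  have "\<forall>z\<in>Z. pregood z" using Z good_pregood by blast
  then have pU: "pregood ?U" by (rule pregood_Union)
  have "x \<in> clo ?U v \<Longrightarrow> x \<in> b v \<longrightarrow> x \<in> a v" for x
  proof (induction rule: clo.induct)
    case base then show ?case using ga good_self by auto
  next
    case (step w x)
    show ?case
    proof
      assume xb: "x \<in> b v"
      obtain z where zZ: "z \<in> Z" and xz: "x \<in> z w" using step.hyps(2) by auto
      have gz: "good z" using Z zZ by auto
      have xw: "tle x w" using gz xz good_down by auto
      have wv: "tle w v" using clo_down[OF step.hyps(1) pU] .
      have "w \<in> b v" using good_path[OF gb xb xw wv] .
      then have "w \<in> a v" using step.IH by auto
      moreover have "a v \<subseteq> z v" using Z zZ by blast
      ultimately have "w \<in> z v" by blast
      then have "x \<in> z v" using good_lam[OF gz] xz by auto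
      moreover have "z v \<inter> b v \<subseteq> a v" using Z zZ by blast
      ultimately show "x \<in> a v" using xb by blast
    qed
  qed
  then show ?thesis by auto
qed

lemma jsd:
  assumes ga: "good a" and gb: "good b" and Zne: "Z \<noteq> {}"
    and Z: "\<forall>z\<in>Z. good z \<and> (\<forall>v. z v \<subseteq> b v) \<and> (\<forall>v. b v \<subseteq> clo (\<lambda>v. z v \<union> a v) v)"
    and ab: "\<forall>v. a v \<subseteq> b v"
  shows "b u \<subseteq> clo (\<lambda>v. (\<Inter>z\<in>Z. z v) \<union> a v) u"
proof -
  let ?m = "\<lambda>v. \<Inter>z\<in>Z. z v"
  let ?K = "clo (\<lambda>v. ?m v \<union> a v)"
  have "\<forall>z\<in>Z. good z" using Z by blast
  then have gm: "good ?m" by (rule good_Inter[OF Zne])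
  have pK: "pregood (\<lambda>v. ?m v \<union> a v)" using pregood_un gm ga by auto
  have gK: "good ?K" using clo_good pK by auto
  have ubK: "?m v \<union> a v \<subseteq> ?K v" for v using clo_ub[OF pK] by auto
  have "x \<in> b u \<Longrightarrow> x \<in> ?K u" for x
  proof (induction "card {y\<in>V. tle y u} + card {y\<in>V. tle x y}" arbitrary: u x rule: less_induct)
    case less
    have xu: "tle x u" using good_down gb less.prems by auto
    then have uV: "u \<in> V" using tle_V by auto
    show ?case
    proof (cases "x = u")
      case True then show ?thesis using uV clo.base by auto
    next
      case xne: False
      have alt: "x \<in> z u \<or> (\<exists>w. w \<in> b u \<and> w \<noteq> x \<and> tle x w \<and> tle w u \<and> (x \<in> a w \<or> (w \<noteq> u \<and> x \<in> z w)))"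
        if zZ: "z \<in> Z" for z
      proof -
        have gz: "good z" using Z zZ by blast
        have "b u \<subseteq> clo (\<lambda>v. z v \<union> a v) u" using Z zZ by blast
        then have "x \<in> clo (\<lambda>v. z v \<union> a v) u" using less.prems by blast
        then obtain w where w: "w \<in> clo (\<lambda>v. z v \<union> a v) u" "w \<noteq> x" "x \<in> z w \<union> a w"
          using clo_cases xne by blast
        have zb: "\<forall>v. z v \<subseteq> b v" using Z zZ by blast
        have "\<And>v. z v \<union> a v \<subseteq> b v" using zb ab by blast
        then have "clo (\<lambda>v. z v \<union> a v) u \<subseteq> b u" by (rule clo_least[OF gb])
        then have wb: "w \<in> b u" using w by auto
        have "tle x w" using w(3) good_down gz ga by auto
        moreover have "tle w u" using wb good_down gb by auto
        ultimately show ?thesis using w wb by auto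
      qed
      show ?thesis
      proof (cases "\<forall>z\<in>Z. x \<in> z u")
        case True
        then show ?thesis using ubK by blast
      next
        case False
        then obtain z where zZ: "z \<in> Z" and nz: "x \<notin> z u" by blast
        then obtain w where w: "w \<in> b u" "w \<noteq> x" "tle x w" "tle w u"
          and c: "x \<in> a w \<or> (w \<noteq> u \<and> x \<in> z w)" using alt[OF zZ] by blast
        have lt1: "card {y\<in>V. tle y u} + card {y\<in>V. tle w y} < card {y\<in>V. tle y u} + card {y\<in>V. tle x y}"
          using card_up_less[OF w(3) w(2)[symmetric]] by auto
        have wK: "w \<in> ?K u" using less.hyps[OF lt1 w(1)] .
        then have KwKu: "?K w \<subseteq> ?K u" using good_lam[OF gK] by auto
        from c show ?thesis
        proof
          assume "x \<in> a w"
          then show ?thesis using ubK KwKu by blast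
        next
          assume c2: "w \<noteq> u \<and> x \<in> z w"
          moreover have "z w \<subseteq> b w" using Z zZ by blast
          ultimately have xbw: "x \<in> b w" by blast
          have lt2: "card {y\<in>V. tle y w} + card {y\<in>V. tle x y} < card {y\<in>V. tle y u} + card {y\<in>V. tle x y}"
            using card_down_less[OF w(4)] c2 by auto
          have "x \<in> ?K w" using less.hyps[OF lt2 xbw] .
          then show ?thesis using KwKu by blast
        qed
      qed
    qed
  qed
  then show ?thesis by auto
qed

lemma L_eq: "ornamentations V r p = {d. good d}"
  unfolding ornamentations_def using ornamentation_good by auto

lemma finite_L: "finite {d. good d}"
proof -
  let ?f = "\<lambda>g v. if v \<in> V then g v else ({} :: 'a set)"
  have "{d. good d} \<subseteq> ?f ` (PiE V (\<lambda>_. Pow V))"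
  proof
    fix d assume "d \<in> {d. good d}"
    then have gd: "good d" by simp
    have "restrict d V \<in> PiE V (\<lambda>_. Pow V)"
      unfolding restrict_PiE_iff using good_down[OF gd] tle_V by blast
    moreover have "d = ?f (restrict d V)"
    proof
      fix v show "d v = ?f (restrict d V) v" using gd unfolding good_def by auto
    qed
    ultimately show "d \<in> ?f ` (PiE V (\<lambda>_. Pow V))" by blast
  qed
  moreover have "finite (PiE V (\<lambda>_. Pow V))" using finV by (simp add: finite_PiE)
  ultimately show ?thesis using finite_subset by blast
qed

lemma bot_good: "good (\<lambda>v. if v \<in> V then {v} else {})"
  unfolding good_def orn_at_def using tle_refl by auto

lemma main: "semidistributive (ornamentations V r p) (orn_le V)"
proof -
  let ?L = "{d. good d}"
  let ?le = "orn_le V"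
  have le: "?le a b \<longleftrightarrow> (\<forall>v. a v \<subseteq> b v)" if "a \<in> ?L" for a b
    using le_iff that by auto
  have meetg: "good (\<lambda>v. x v \<inter> y v)" if "good x" "good y" for x y
  proof -
    have "good (\<lambda>v. \<Inter>z\<in>{x,y}. z v)" using good_Inter[of "{x,y}"] that by auto
    then show ?thesis by simp
  qed
  have c1: "finite ?L" using finite_L .
  have c2: "?L \<noteq> {}" using bot_good by blast
  have c3: "\<forall>x\<in>?L. ?le x x"
  proof
    fix x assume xL: "x \<in> ?L" show "?le x x" unfolding le[OF xL] by blast
  qed
  have c4: "\<forall>x\<in>?L. \<forall>y\<in>?L. ?le x y \<and> ?le y x \<longrightarrow> x = y"
  proof (intro ballI impI)
    fix x y assume xL: "x \<in> ?L" and yL: "y \<in> ?L" and h: "?le x y \<and> ?le y x"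
    show "x = y"
    proof
      fix v show "x v = y v" using h le[OF xL] le[OF yL] by blast
    qed
  qed
  have c5: "\<forall>x\<in>?L. \<forall>y\<in>?L. \<forall>z\<in>?L. ?le x y \<and> ?le y z \<longrightarrow> ?le x z"
  proof (intro ballI impI)
    fix x y z assume xL: "x \<in> ?L" and yL: "y \<in> ?L" and zL: "z \<in> ?L" and h: "?le x y \<and> ?le y z"
    have "\<forall>v. x v \<subseteq> y v" "\<forall>v. y v \<subseteq> z v" using h le[OF xL] le[OF yL] by auto
    then show "?le x z" unfolding le[OF xL] by blast
  qed
  have c6: "\<forall>x\<in>?L. \<forall>y\<in>?L. (\<exists>m. is_meet ?L ?le x y m) \<and> (\<exists>j. is_join ?L ?le x y j)"
  proof (intro ballI conjI)
    fix x y assume xL: "x \<in> ?L" and yL: "y \<in> ?L"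
    have gx: "good x" and gy: "good y" using xL yL by auto
    have mL: "(\<lambda>v. x v \<inter> y v) \<in> ?L" using meetg[OF gx gy] by simp
    have "is_meet ?L ?le x y (\<lambda>v. x v \<inter> y v)"
      unfolding is_meet_def
    proof (intro conjI ballI impI)
      show "(\<lambda>v. x v \<inter> y v) \<in> ?L" using mL .
      show "?le (\<lambda>v. x v \<inter> y v) x" unfolding le[OF mL] by blast
      show "?le (\<lambda>v. x v \<inter> y v) y" unfolding le[OF mL] by blast
      fix z assume zL: "z \<in> ?L" and h: "?le z x \<and> ?le z y"
      then show "?le z (\<lambda>v. x v \<inter> y v)" unfolding le[OF zL] by blast
    qed
    then show "\<exists>m. is_meet ?L ?le x y m" by blast
  next
    fix x y assume xL: "x \<in> ?L" and yL: "y \<in> ?L"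
    have gx: "good x" and gy: "good y" using xL yL by auto
    have pj: "pregood (\<lambda>v. x v \<union> y v)" using pregood_un[OF gx gy] .
    have cL: "clo (\<lambda>v. x v \<union> y v) \<in> ?L" using clo_good[OF pj] by simp
    have "is_join ?L ?le x y (clo (\<lambda>v. x v \<union> y v))"
      unfolding is_join_def
    proof (intro conjI ballI impI)
      show "clo (\<lambda>v. x v \<union> y v) \<in> ?L" using cL .
      have ub: "\<And>v. x v \<union> y v \<subseteq> clo (\<lambda>v. x v \<union> y v) v" by (rule clo_ub[OF pj])
      show "?le x (clo (\<lambda>v. x v \<union> y v))" unfolding le[OF xL] using ub by blast
      show "?le y (clo (\<lambda>v. x v \<union> y v))" unfolding le[OF yL] using ub by blast
      fix z assume zL: "z \<in> ?L" and h: "?le x z \<and> ?le y z"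
      then have gz: "good z" by simp
      have "\<And>v. x v \<union> y v \<subseteq> z v" using h unfolding le[OF xL] le[OF yL] by blast
      then have "\<And>v. clo (\<lambda>v. x v \<union> y v) v \<subseteq> z v" by (rule clo_least[OF gz])
      then show "?le (clo (\<lambda>v. x v \<union> y v)) z" unfolding le[OF cL] by blast
    qed
    then show "\<exists>j. is_join ?L ?le x y j" by blast
  qed
  have fl: "finite_lattice ?L ?le" unfolding finite_lattice_def by (intro conjI c1 c2 c3 c4 c5 c6)
  have sd: "(\<exists>m\<in>{z\<in>?L. is_meet ?L ?le z b a}. \<forall>z\<in>{z\<in>?L. is_meet ?L ?le z b a}. ?le z m) \<and>
        (\<exists>m\<in>{z\<in>?L. is_join ?L ?le z a b}. \<forall>z\<in>{z\<in>?L. is_join ?L ?le z a b}. ?le m z)"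
    if aL: "a \<in> ?L" and bL: "b \<in> ?L" and ab: "?le a b" for a b
  proof
    have ga: "good a" and gb: "good b" using aL bL by auto
    have abv: "\<forall>v. a v \<subseteq> b v" using ab le[OF aL] by auto
    let ?Z = "{z\<in>?L. is_meet ?L ?le z b a}"
    let ?U = "\<lambda>v. \<Union>z\<in>?Z. z v"
    let ?M = "clo ?U"
    have Zp: "\<forall>z\<in>?Z. good z \<and> (\<forall>v. z v \<inter> b v \<subseteq> a v) \<and> (\<forall>v. a v \<subseteq> z v)"
    proof
      fix z assume zZ: "z \<in> ?Z"
      then have gz: "good z" and im: "is_meet ?L ?le z b a" by auto
      have gzb: "(\<lambda>v. z v \<inter> b v) \<in> ?L" using meetg[OF gz gb] by simp
      have "?le (\<lambda>v. z v \<inter> b v) z" "?le (\<lambda>v. z v \<inter> b v) b" unfolding le[OF gzb] by auto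
      moreover have "\<forall>y\<in>?L. ?le y z \<and> ?le y b \<longrightarrow> ?le y a" using im unfolding is_meet_def by blast
      ultimately have "?le (\<lambda>v. z v \<inter> b v) a" using gzb by blast
      then have "\<forall>v. z v \<inter> b v \<subseteq> a v" unfolding le[OF gzb] by auto
      moreover have "?le a z" using im unfolding is_meet_def by blast
      then have "\<forall>v. a v \<subseteq> z v" unfolding le[OF aL] by auto
      ultimately show "good z \<and> (\<forall>v. z v \<inter> b v \<subseteq> a v) \<and> (\<forall>v. a v \<subseteq> z v)" using gz by blast
    qed
    have "?le a a" using c3 aL by blast
    then have "is_meet ?L ?le a b a" using is_meetI[of a "?L" "?le" a b, OF aL _ ab] by blast
    then have aZ: "a \<in> ?Z" using aL by blast
    have "\<forall>z\<in>?Z. good z" using Zp by blast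
    then have "\<forall>z\<in>?Z. pregood z" using good_pregood by blast
    then have pU: "pregood ?U" by (rule pregood_Union)
    have gM: "good ?M" using clo_good[OF pU] .
    have ubM: "z v \<subseteq> ?M v" if "z \<in> ?Z" for z v
    proof -
      have "z v \<subseteq> ?U v" using that by (rule UN_upper)
      also have "... \<subseteq> ?M v" by (rule clo_ub[OF pU])
      finally show "z v \<subseteq> ?M v" .
    qed
    have msdv: "?M v \<inter> b v \<subseteq> a v" for v by (rule msd[OF ga gb Zp])
    have m1: "?le a ?M" unfolding le[OF aL] using ubM[OF aZ] by blast
    have m2: "\<forall>y\<in>?L. ?le y ?M \<and> ?le y b \<longrightarrow> ?le y a"
    proof (intro ballI impI)
      fix y assume yL: "y \<in> ?L" and h: "?le y ?M \<and> ?le y b"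
      then have "\<And>v. y v \<subseteq> ?M v \<inter> b v" unfolding le[OF yL] by blast
      then show "?le y a" unfolding le[OF yL] using msdv by blast
    qed
    have "is_meet ?L ?le ?M b a"
      by (rule is_meetI[OF aL m1 ab m2])
    then have MZ: "?M \<in> ?Z" using gM by auto
    have "\<forall>z\<in>?Z. ?le z ?M"
    proof
      fix z assume zZ: "z \<in> ?Z"
      then have zL: "z \<in> ?L" by auto
      show "?le z ?M" unfolding le[OF zL] using ubM[OF zZ] by blast
    qed
    then show "\<exists>m\<in>?Z. \<forall>z\<in>?Z. ?le z m" using MZ by blast
  next
    have ga: "good a" and gb: "good b" using aL bL by auto
    have abv: "\<forall>v. a v \<subseteq> b v" using ab le[OF aL] by auto
    let ?Z = "{z\<in>?L. is_join ?L ?le z a b}"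
    let ?m = "\<lambda>v. \<Inter>z\<in>?Z. z v"
    have "?le b b" using c3 bL by blast
    then have "is_join ?L ?le b a b" using is_joinI[of b "?L" "?le" b a, OF bL _ ab] by blast
    then have bZ: "b \<in> ?Z" using bL by blast
    then have Zne: "?Z \<noteq> {}" by blast
    have Zp: "\<forall>z\<in>?Z. good z \<and> (\<forall>v. z v \<subseteq> b v) \<and> (\<forall>v. b v \<subseteq> clo (\<lambda>v. z v \<union> a v) v)"
    proof
      fix z assume zZ: "z \<in> ?Z"
      then have gz: "good z" and ij: "is_join ?L ?le z a b" and zL: "z \<in> ?L" by auto
      have pza: "pregood (\<lambda>v. z v \<union> a v)" using pregood_un[OF gz ga] .
      have cL: "clo (\<lambda>v. z v \<union> a v) \<in> ?L" using clo_good[OF pza] by simp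
      have ub: "\<And>v. z v \<union> a v \<subseteq> clo (\<lambda>v. z v \<union> a v) v" by (rule clo_ub[OF pza])
      have "?le z (clo (\<lambda>v. z v \<union> a v))" unfolding le[OF zL] using ub by blast
      moreover have "?le a (clo (\<lambda>v. z v \<union> a v))" unfolding le[OF aL] using ub by blast
      moreover have "\<forall>y\<in>?L. ?le z y \<and> ?le a y \<longrightarrow> ?le b y" using ij unfolding is_join_def by blast
      ultimately have "?le b (clo (\<lambda>v. z v \<union> a v))" using cL by blast
      then have "\<forall>v. b v \<subseteq> clo (\<lambda>v. z v \<union> a v) v" unfolding le[OF bL] by auto
      moreover have "?le z b" using ij unfolding is_join_def by blast
      then have "\<forall>v. z v \<subseteq> b v" unfolding le[OF zL] by auto
      ultimately show "good z \<and> (\<forall>v. z v \<subseteq> b v) \<and> (\<forall>v. b v \<subseteq> clo (\<lambda>v. z v \<union> a v) v)"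
        using gz by blast
    qed
    have "\<forall>z\<in>?Z. good z" using Zp by blast
    then have gm: "good ?m" by (rule good_Inter[OF Zne])
    then have mL: "?m \<in> ?L" by simp
    have jsdv: "b u \<subseteq> clo (\<lambda>v. ?m v \<union> a v) u" for u using jsd[OF ga gb Zne Zp abv] by blast
    have j1: "?le ?m b" unfolding le[OF mL] using bZ by blast
    have j2: "\<forall>y\<in>?L. ?le ?m y \<and> ?le a y \<longrightarrow> ?le b y"
    proof (intro ballI impI)
      fix y assume yL: "y \<in> ?L" and h: "?le ?m y \<and> ?le a y"
      then have gy: "good y" by simp
      have "\<And>v. ?m v \<union> a v \<subseteq> y v" using h unfolding le[OF mL] le[OF aL] by blast
      then have "\<And>v. clo (\<lambda>v. ?m v \<union> a v) v \<subseteq> y v" by (rule clo_least[OF gy])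
      then show "?le b y" unfolding le[OF bL] using jsdv by blast
    qed
    have "is_join ?L ?le ?m a b"
      by (rule is_joinI[OF bL j1 ab j2])
    then have mZ: "?m \<in> ?Z" using mL by auto
    have "\<forall>z\<in>?Z. ?le ?m z" unfolding le[OF mL] by blast
    then show "\<exists>m\<in>?Z. \<forall>z\<in>?Z. ?le m z" using mZ by blast
  qed
  show ?thesis unfolding semidistributive_def L_eq
    apply (rule conjI[OF fl])
    apply (intro ballI impI)
    apply (rule sd)
      apply assumption+
    done
qed

end

theorem theorem6p2:
  fixes V :: "'a set" and r :: 'a and p :: "'a \<Rightarrow> 'a"
  assumes "rooted_tree V r p"
  shows "semidistributive (ornamentations V r p) (orn_le V)"
  using rtree.main[OF rtree.intro[OF assms]] .

end
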